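(* Let $\mathcal{G}\in\mathcal{G}_2^{sym}$. Then there exists a sequence $\mathcal{K}_1=\mathcal{G}^{(1)}\rightarrow\mathcal{G}^{(2)}\rightarrow\cdots\rightarrow\mathcal{G}^{(n)}=\mathcal{G}$ of elements of $\mathcal{G}_2^{sym}$ such that for all $2\le i\le n$, $\mathcal{G}^{(i)}$ is obtained from $\mathcal{G}^{(i-1)}$ by a symmetric $2$-tree $j$-extension for some $j\in\{0,1\}$.
   Context: A multi-graph is finite and loop-free, possibly with parallel edges. A $2$-tree decomposition is $(G;T_1,T_2)$ with $G$ a multi-graph and $T_1,T_2$ spanning trees of $G$ whose edge sets partition $E(G)$. Let $\mathbb{Z}_2=\langle s\rangle$. A $\mathbb{Z}_2$-symmetric multi-graph is a pair $(G,\theta)$ with $\theta:\mathbb{Z}_2\to\mathrm{Aut}(G)$ a non-trivial homomorphism; write $s_\theta=\theta(s)$ and for an edge $e=v_1v_2$, $s_\theta(e)=s_\theta(v_1)s_\theta(v_2)$. A vertex $v$ (edge $e$) is fixed if $s_\theta(v)=v$ ($s_\theta(e)=e$). A symmetric $2$-tree decomposition is $(G;T_1,T_2;\theta)$ where $(G;T_1,T_2)$ is a $2$-tree decomposition, $(G,\theta)$ is $\mathbb{Z}_2$-symmetric and $s_\theta(T_i)=T_i$ for $i=1,2$. $\mathcal{G}_2^{sym}$ denotes the set of symmetric $2$-tree decompositions with no fixed edges, together with $\mathcal{K}_1=(K_1;T_1,T_2;\theta)$ where $K_1$ is a single vertex, the $T_i$ are edgeless and $\theta$ is trivial. For $d\in\{1,2\}$: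 $(G',\theta')$ is obtained from $(G,\theta)$ by a symmetric $d$-dimensional $0$-extension if $V(G')=V(G)\cup\{v,s_{\theta'}(v)\}$ with $v,s_{\theta'}(v)\notin V(G)$ distinct, $s_{\theta'}|_{V(G)}=s_\theta$, and $E(G')=E(G)+\{vv_i,s_{\theta'}(vv_i):i=1,\dots,d\}$ for some not necessarily distinct $v_1,\dots,v_d\in V(G)$; it is obtained by a symmetric $d$-dimensional $1$-extension if the first two conditions hold and there are $v_1,\dots,v_{d+1}\in V(G)$ with $e=v_1v_2\in E(G)$ (otherwise not necessarily distinct) such that $E(G')=E(G)-\{e,s_\theta(e)\}+\{vv_i,s_{\theta'}(vv_i):i=1,\dots,d+1\}$. A symmetric $2$-tree decomposition $(G';T_1',T_2';\theta')$ is obtained from $(G;T_1,T_2;\theta)$ by a symmetric $2$-tree $j$-extension ($j\in\{0,1\}$) if $(G',\theta')$ is obtained from $(G,\theta)$ by a symmetric $2$-dimensional $j$-extension and, for $i=1,2$, $(T_i',\theta')$ is obtained from $(T_i,\theta)$ (with the restricted automorphisms) by a symmetric $1$-dimensional $k_i$-extension with the same new vertices, where $k_i\in\{0,1\}$ and $k_1+k_2=j$. *)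

theory Defs
  imports Main "HOL-Library.Multiset"
begin

text \<open>A multi-graph is a finite nonempty vertex set together with a multiset of edges;
an edge is a 2-element vertex set (loop-free; parallel edges = multiplicities).
A 2-tree decomposition is stored as its vertex set, the two spanning trees
(whose multiset sum is the edge multiset of G) and the map s_theta = theta(s).\<close>

record 'v s2td =
  verts :: "'v set"
  tree1 :: "'v set multiset"
  tree2 :: "'v set multiset"
  symm  :: "'v \<Rightarrow> 'v"

definition edges :: "'v s2td \<Rightarrow> 'v set multiset" where
  "edges D = tree1 D + tree2 D"

definition edge_in :: "'v set \<Rightarrow> 'v set \<Rightarrow> bool" where
  "edge_in V e \<longleftrightarrow> (\<exists>a b. a \<noteq> b \<and> a \<in> V \<and> b \<in> V \<and> e = {a, b})"

definition reach :: "'v set multiset \<Rightarrow> 'v \<Rightarrow> 'v \<Rightarrow> bool" where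
  "reach T = (\<lambda>x y. {x, y} \<in># T)\<^sup>*\<^sup>*"

definition connected_on :: "'v set \<Rightarrow> 'v set multiset \<Rightarrow> bool" where
  "connected_on V T \<longleftrightarrow> (\<forall>u\<in>V. \<forall>w\<in>V. reach T u w)"

text \<open>Spanning tree: spanning connected subgraph without cycles, i.e. every edge
(occurrence) is a bridge.\<close>
definition spanning_tree :: "'v set \<Rightarrow> 'v set multiset \<Rightarrow> bool" where
  "spanning_tree V T \<longleftrightarrow>
     (\<forall>e\<in>#T. edge_in V e) \<and> connected_on V T \<and>
     (\<forall>e\<in>#T. \<forall>a b. e = {a, b} \<longrightarrow> \<not> reach (T - {#e#}) a b)"

definition sym_2td :: "'v s2td \<Rightarrow> bool" where
  "sym_2td D \<longleftrightarrow>
     finite (verts D) \<and> verts D \<noteq> {} \<and>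
     spanning_tree (verts D) (tree1 D) \<and> spanning_tree (verts D) (tree2 D) \<and>
     symm D ` verts D \<subseteq> verts D \<and> (\<forall>x\<in>verts D. symm D (symm D x) = x) \<and>
     (\<exists>x\<in>verts D. symm D x \<noteq> x) \<and>
     image_mset (image (symm D)) (tree1 D) = tree1 D \<and>
     image_mset (image (symm D)) (tree2 D) = tree2 D"

definition no_fixed_edges :: "'v s2td \<Rightarrow> bool" where
  "no_fixed_edges D \<longleftrightarrow> (\<forall>e\<in>#edges D. symm D ` e \<noteq> e)"

definition is_K1 :: "'v s2td \<Rightarrow> bool" where
  "is_K1 D \<longleftrightarrow> (\<exists>x. verts D = {x} \<and> tree1 D = {#} \<and> tree2 D = {#} \<and> symm D x = x)"

definition G2sym :: "'v s2td \<Rightarrow> bool" where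
  "G2sym D \<longleftrightarrow> (sym_2td D \<and> no_fixed_edges D) \<or> is_K1 D"

definition new_pair :: "'v s2td \<Rightarrow> 'v s2td \<Rightarrow> 'v \<Rightarrow> bool" where
  "new_pair D D' v \<longleftrightarrow>
     v \<notin> verts D \<and> symm D' v \<notin> verts D \<and> v \<noteq> symm D' v \<and>
     verts D' = verts D \<union> {v, symm D' v} \<and> (\<forall>x\<in>verts D. symm D' x = symm D x)"

definition add_edges :: "('v \<Rightarrow> 'v) \<Rightarrow> 'v \<Rightarrow> 'v list \<Rightarrow> 'v set multiset" where
  "add_edges s v us = mset (concat (map (\<lambda>u. [{v, u}, s ` {v, u}]) us))"

definition sym_ext ::
  "'v set \<Rightarrow> ('v \<Rightarrow> 'v) \<Rightarrow> 'v \<Rightarrow> nat \<Rightarrow> nat \<Rightarrow> 'v set multiset \<Rightarrow> 'v set multiset \<Rightarrow> bool" where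
  "sym_ext V s v d k E E' \<longleftrightarrow>
     (\<exists>us. length us = d + k \<and> set us \<subseteq> V \<and>
        ((k = 0 \<and> E' = E + add_edges s v us) \<or>
         (k = 1 \<and> {us ! 0, us ! 1} \<in># E \<and>
          E' = E - mset_set {{us ! 0, us ! 1}, s ` {us ! 0, us ! 1}} + add_edges s v us)))"

definition two_tree_ext :: "'v s2td \<Rightarrow> 'v s2td \<Rightarrow> nat \<Rightarrow> bool" where
  "two_tree_ext D D' j \<longleftrightarrow> j \<in> {0, 1} \<and>
     (\<exists>v. new_pair D D' v \<and>
        sym_ext (verts D) (symm D') v 2 j (edges D) (edges D') \<and>
        (\<exists>k1 k2. k1 \<in> {0, 1} \<and> k2 \<in> {0, 1} \<and> k1 + k2 = j \<and>
           sym_ext (verts D) (symm D') v 1 k1 (tree1 D) (tree1 D') \<and>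
           sym_ext (verts D) (symm D') v 1 k2 (tree2 D) (tree2 D')))"

end

theory Submission
  imports Defs
begin


lemma reach_refl[simp]: "reach T x x" by (simp add: reach_def)

lemma reach_edge: "{x,y} \<in># T \<Longrightarrow> reach T x y"
  unfolding reach_def by (rule r_into_rtranclp) simp

lemma reach_trans: "reach T x y \<Longrightarrow> reach T y z \<Longrightarrow> reach T x z"
  unfolding reach_def by (rule rtranclp_trans)

lemma reach_map:
  assumes "\<And>x y. {x,y} \<in># X \<Longrightarrow> reach Y (f x) (f y)"
    and "reach X a b"
  shows "reach Y (f a) (f b)"
  using assms(2) unfolding reach_def
proof (induction rule: rtranclp_induct)
  case base then show ?case by simp
next
  case (step y z)
  then show ?case using assms(1)[of y z] unfolding reach_def by (meson rtranclp_trans)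
qed

lemma reach_lift:
  assumes "\<And>x y. {x,y} \<in># X \<Longrightarrow> reach Y x y" and "reach X a b"
  shows "reach Y a b"
  using reach_map[of X Y "\<lambda>x. x" a b] assms by simp

lemma reach_mono: "(\<And>e. e \<in># X \<Longrightarrow> e \<in># Y) \<Longrightarrow> reach X a b \<Longrightarrow> reach Y a b"
  by (rule reach_lift) (auto intro: reach_edge)

lemma reach_sym: "reach T x y \<Longrightarrow> reach T y x"
  unfolding reach_def
proof (induction rule: rtranclp_induct)
  case base then show ?case by simp
next
  case (step y z)
  have "{z,y} \<in># T" using step(2) by (simp add: insert_commute)
  then show ?case using step(3) by (meson converse_rtranclp_into_rtranclp)
qed

lemma reach_empty: "reach {#} x y \<Longrightarrow> x = y"
  unfolding reach_def by (induction rule: rtranclp_induct) auto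

lemma reach_start_edge: "reach T x y \<Longrightarrow> x \<noteq> y \<Longrightarrow> \<exists>e\<in>#T. x \<in> e"
  unfolding reach_def by (erule converse_rtranclpE) auto

lemma reach_avoid:
  assumes "reach T a y"
  shows "y = a \<or> (\<exists>w. {a,w} \<in># T \<and> reach (filter_mset (\<lambda>e. a \<notin> e) T) w y)"
  using assms unfolding reach_def
proof (induction rule: rtranclp_induct)
  case base then show ?case by simp
next
  case (step y z)
  show ?case
  proof (cases "z = a")
    case True then show ?thesis by simp
  next
    case False
    show ?thesis
    proof (cases "y = a")
      case True then show ?thesis using step(2) False by auto
    next
      case ya: False
      with step(3) obtain w where w: "{a,w} \<in># T" "reach (filter_mset (\<lambda>e. a \<notin> e) T) w y"
        unfolding reach_def by auto
      have "{y,z} \<in># filter_mset (\<lambda>e. a \<notin> e) T" using step(2) ya False by auto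
      then have "reach (filter_mset (\<lambda>e. a \<notin> e) T) y z" by (rule reach_edge)
      then have "reach (filter_mset (\<lambda>e. a \<notin> e) T) w z" using w(2) by (rule reach_trans[rotated])
      then show ?thesis using w(1) unfolding reach_def by blast
    qed
  qed
qed

definition acyc :: "'v set multiset \<Rightarrow> bool" where
  "acyc T \<longleftrightarrow> (\<forall>e\<in>#T. \<forall>a b. e = {a, b} \<longrightarrow> \<not> reach (T - {#e#}) a b)"

definition comps :: "'v set \<Rightarrow> 'v set multiset \<Rightarrow> 'v set set" where
  "comps V T = (\<lambda>x. {y\<in>V. reach T x y}) ` V"

lemma card_less_quot:
  assumes fin: "finite V" and fg: "\<And>x y. x \<in> V \<Longrightarrow> y \<in> V \<Longrightarrow> f x = f y \<Longrightarrow> g x = g y"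
    and ab: "a \<in> V" "b \<in> V" "f a \<noteq> f b" "g a = g b"
  shows "card (g ` V) < card (f ` V)"
proof -
  define h where "h = (\<lambda>X. g (inv_into V f X))"
  have hg: "h (f x) = g x" if "x \<in> V" for x
  proof -
    have "inv_into V f (f x) \<in> V" "f (inv_into V f (f x)) = f x"
      using that by (auto intro: inv_into_into f_inv_into_f)
    then show ?thesis unfolding h_def using fg that by blast
  qed
  have img: "h ` (f ` V) = g ` V" using hg by (force simp: image_image)
  have "\<not> inj_on h (f ` V)" using ab hg unfolding inj_on_def by auto
  then have "card (h ` (f ` V)) \<noteq> card (f ` V)" using fin by (simp add: inj_on_iff_eq_card)
  moreover have "card (h ` (f ` V)) \<le> card (f ` V)" using fin by (simp add: card_image_le)
  ultimately show ?thesis using img by simp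
qed

lemma acycD: "acyc T \<Longrightarrow> {a,b} \<in># T \<Longrightarrow> \<not> reach (T - {#{a,b}#}) a b"
  unfolding acyc_def by blast

lemma edge_inE: "edge_in V e \<Longrightarrow> (\<And>a b. a \<noteq> b \<Longrightarrow> a \<in> V \<Longrightarrow> b \<in> V \<Longrightarrow> e = {a,b} \<Longrightarrow> P) \<Longrightarrow> P"
  unfolding edge_in_def by blast

lemma acyc_count:
  assumes "finite V" "\<forall>e\<in>#T. edge_in V e" "acyc T"
  shows "size T + card (comps V T) \<le> card V"
  using assms(2,3)
proof (induction T)
  case empty
  then show ?case unfolding comps_def using assms(1) by (simp add: card_image_le)
next
  case (add e T)
  have "edge_in V e" using add.prems(1) by simp
  then obtain a b where ab: "a \<noteq> b" "a \<in> V" "b \<in> V" "e = {a,b}"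
    by (rule edge_inE)
  have acT: "acyc T"
    unfolding acyc_def
  proof (intro ballI allI impI)
    fix e' a' b' assume e': "e' \<in># T" "e' = {a', b'}"
    show "\<not> reach (T - {#e'#}) a' b'"
    proof
      assume r: "reach (T - {#e'#}) a' b'"
      have "reach (add_mset e T - {#e'#}) a' b'"
        by (rule reach_mono[OF _ r]) (simp add: e'(1) diff_union_swap2)
      moreover have "e' \<in># add_mset e T" using e'(1) by simp
      ultimately show False using acycD[OF add.prems(2), of a' b'] e'(2) by blast
    qed
  qed
  have nab: "\<not> reach T a b" using acycD[OF add.prems(2), of a b] ab(4) by simp
  have IH: "size T + card (comps V T) \<le> card V" using add.IH add.prems(1) acT by simp
  let ?f = "\<lambda>x. {y\<in>V. reach T x y}" and ?g = "\<lambda>x. {y\<in>V. reach (add_mset e T) x y}"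
  have mono: "reach T x y \<Longrightarrow> reach (add_mset e T) x y" for x y
    by (rule reach_mono) auto
  have "card (?g ` V) < card (?f ` V)"
  proof (rule card_less_quot[where f="?f" and g="?g", OF assms(1) _ ab(2,3)])
    fix x y assume xy: "x \<in> V" "y \<in> V" "?f x = ?f y"
    have "y \<in> ?f y" using xy by simp
    then have "y \<in> ?f x" using xy(3) by simp
    then have "reach T x y" by simp
    then have r: "reach (add_mset e T) x y" by (rule mono)
    have "reach (add_mset e T) x z = reach (add_mset e T) y z" for z
      using reach_trans[OF reach_sym[OF r], of z] reach_trans[OF r, of z] by blast
    then show "?g x = ?g y" by simp
  next
    have "b \<in> ?f b" "b \<notin> ?f a" using nab ab by auto
    then show "?f a \<noteq> ?f b" by metis
  next
    have r: "reach (add_mset e T) a b" using ab by (auto intro: reach_edge)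
    have "reach (add_mset e T) a z = reach (add_mset e T) b z" for z
      using reach_trans[OF reach_sym[OF r], of z] reach_trans[OF r, of z] by blast
    then show "?g a = ?g b" by simp
  qed
  then show ?case using IH unfolding comps_def by simp
qed

lemma acyc_size:
  assumes "finite V" "V \<noteq> {}" "\<forall>e\<in>#T. edge_in V e" "acyc T"
  shows "size T + 1 \<le> card V"
proof -
  have "comps V T \<noteq> {}" using assms(2) unfolding comps_def by auto
  moreover have "finite (comps V T)" using assms(1) unfolding comps_def by auto
  ultimately have "card (comps V T) \<ge> 1" by (simp add: Suc_leI card_gt_0_iff)
  then show ?thesis using acyc_count[OF assms(1,3,4)] by simp
qed



lemma spanning_tree_iff: "spanning_tree V T \<longleftrightarrow> (\<forall>e\<in>#T. edge_in V e) \<and> connected_on V T \<and> acyc T"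
  unfolding spanning_tree_def acyc_def by blast

lemma in_diff_single: "e \<noteq> x \<Longrightarrow> e \<in># M - {#x#} \<longleftrightarrow> e \<in># M"
  by (simp add: in_diff_count)

lemma edge_in_pair: "edge_in V {x,y} \<Longrightarrow> x \<in> V \<and> y \<in> V \<and> x \<noteq> y"
  unfolding edge_in_def by (auto simp: doubleton_eq_iff)

lemma edge_in_mem: "edge_in V e \<Longrightarrow> x \<in> e \<Longrightarrow> x \<in> V"
  unfolding edge_in_def by auto

lemma fixed_unique:
  assumes st: "spanning_tree V T" and inv: "image_mset (image s) T = T"
    and nf: "\<forall>e\<in>#T. s ` e \<noteq> e" and sV: "s ` V \<subseteq> V" and inv2: "\<forall>x\<in>V. s (s x) = x"
    and ab: "a \<in> V" "b \<in> V" "s a = a" "s b = b"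
  shows "a = b"
proof (rule ccontr)
  assume neq: "a \<noteq> b"
  have ein: "\<forall>e\<in>#T. edge_in V e" and ac: "acyc T" and con: "connected_on V T"
    using st unfolding spanning_tree_iff by auto
  have "reach T a b" using con ab unfolding connected_on_def by auto
  define Ta where "Ta = filter_mset (\<lambda>e. a \<notin> e) T"
  from reach_avoid[OF \<open>reach T a b\<close>] have "b = a \<or> (\<exists>w. {a,w} \<in># T \<and> reach Ta w b)"
    unfolding Ta_def .
  then have "\<exists>w. {a,w} \<in># T \<and> reach Ta w b" using neq by metis
  then obtain w where w: "{a,w} \<in># T" and rw: "reach Ta w b" by blast
  have wV: "w \<in> V" using edge_in_pair[OF ein[rule_format, OF w]] by simp
  have img: "{s x, s y} \<in># Ta" if "{x,y} \<in># Ta" for x y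
  proof -
    have xy: "{x,y} \<in># T" "a \<notin> {x,y}" using that unfolding Ta_def by auto
    have "x \<in> V" "y \<in> V" using edge_in_pair[OF ein[rule_format, OF xy(1)]] by simp_all
    then have "s x \<noteq> a" "s y \<noteq> a" using xy(2) inv2 ab(3) by (metis insertCI)+
    moreover have "s ` {x,y} \<in># T" using xy(1) inv by (metis image_eqI multiset.set_map)
    ultimately show ?thesis unfolding Ta_def by auto
  qed
  have r1: "reach Ta w b" using rw .
  have "reach Ta (s w) (s b)" by (rule reach_map[OF reach_edge[OF img] r1])
  then have r2: "reach Ta b (s w)" using ab(4) by (auto intro: reach_sym)
  have sub: "e \<in># T - {#{a,w}#}" if "e \<in># Ta" for e
    using that unfolding Ta_def by (subst in_diff_single) auto
  have "reach Ta w (s w)" using reach_trans[OF r1 r2] .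
  then have r3: "reach (T - {#{a,w}#}) w (s w)" using reach_mono[of Ta "T - {#{a,w}#}", OF sub] by blast
  have sw: "s ` {a,w} \<in># T" using w inv by (metis image_eqI multiset.set_map)
  have "s ` {a,w} = {a, s w}" using ab(3) by auto
  moreover have ne: "{a, s w} \<noteq> {a,w}" using nf[rule_format, OF w] calculation by simp
  ultimately have "{a, s w} \<in># T - {#{a,w}#}" using sw in_diff_single[OF ne] by simp
  then have "reach (T - {#{a,w}#}) a (s w)" by (rule reach_edge)
  then have "reach (T - {#{a,w}#}) a w" using reach_trans[OF _ reach_sym[OF r3]] by blast
  then show False using acycD[OF ac w] by simp
qed

definition deg :: "'v set multiset \<Rightarrow> 'v \<Rightarrow> nat" where
  "deg T w = size (filter_mset (\<lambda>e. w \<in> e) T)"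

lemma deg_sum:
  assumes "finite V" "\<forall>e\<in>#T. edge_in V e"
  shows "(\<Sum>w\<in>V. deg T w) = 2 * size T"
  using assms(2)
proof (induction T)
  case empty then show ?case by (simp add: deg_def)
next
  case (add e T)
  have "edge_in V e" using add.prems by simp
  then obtain a b where ab: "a \<noteq> b" "a \<in> V" "b \<in> V" "e = {a,b}" by (rule edge_inE)
  have d: "deg (add_mset e T) w = deg T w + (if w \<in> e then 1 else 0)" for w
    by (simp add: deg_def)
  have "(\<Sum>w\<in>V. (if w \<in> e then 1 else 0::nat)) = card (V \<inter> e)"
    using assms(1) by (simp add: sum.If_cases)
  also have "V \<inter> e = {a,b}" using ab by auto
  finally have c: "(\<Sum>w\<in>V. (if w \<in> e then 1 else 0::nat)) = 2" using ab by simp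
  show ?case using add c by (simp add: d sum.distrib)
qed

lemma deg_pos:
  assumes "spanning_tree V T" "w \<in> V" "w' \<in> V" "w \<noteq> w'"
  shows "deg T w \<ge> 1"
proof -
  have "reach T w w'" using assms unfolding spanning_tree_def connected_on_def by auto
  from reach_start_edge[OF this assms(4)] obtain e where "e \<in># T" "w \<in> e" by auto
  then have "e \<in># filter_mset (\<lambda>e. w \<in> e) T" by simp
  then have "filter_mset (\<lambda>e. w \<in> e) T \<noteq> {#}" by force
  then have "size (filter_mset (\<lambda>e. w \<in> e) T) \<noteq> 0" by simp
  then show ?thesis unfolding deg_def by (metis One_nat_def Suc_leI neq0_conv)
qed



lemma nfe_trees:
  assumes "no_fixed_edges D"
  shows "\<forall>e\<in>#tree1 D. symm D ` e \<noteq> e" "\<forall>e\<in>#tree2 D. symm D ` e \<noteq> e"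
  using assms unfolding no_fixed_edges_def edges_def by auto

lemma low_vertex:
  assumes sd: "sym_2td D" and nf: "no_fixed_edges D"
  shows "\<exists>v\<in>verts D. symm D v \<noteq> v \<and> deg (tree1 D) v + deg (tree2 D) v \<le> 3"
proof (rule ccontr)
  assume H: "\<not> ?thesis"
  define V where "V = verts D"
  define s where "s = symm D"
  define d where "d = (\<lambda>w. deg (tree1 D) w + deg (tree2 D) w)"
  have fin: "finite V" and st1: "spanning_tree V (tree1 D)" and st2: "spanning_tree V (tree2 D)"
    and sV: "s ` V \<subseteq> V" and inv2: "\<forall>x\<in>V. s (s x) = x" and ex: "\<exists>x\<in>V. s x \<noteq> x"
    and i1: "image_mset (image s) (tree1 D) = tree1 D"
    and i2: "image_mset (image s) (tree2 D) = tree2 D"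
    using sd unfolding sym_2td_def V_def s_def by auto
  have V0: "V \<noteq> {}" using ex by auto
  have n1: "\<forall>e\<in>#tree1 D. s ` e \<noteq> e" and n2: "\<forall>e\<in>#tree2 D. s ` e \<noteq> e"
    using nfe_trees[OF nf] unfolding s_def by auto
  have H': "\<forall>v\<in>V. s v \<noteq> v \<longrightarrow> d v \<ge> 4" using H unfolding V_def s_def d_def by auto
  define F where "F = {x\<in>V. s x = x}"
  have FV: "F \<subseteq> V" unfolding F_def by auto
  have cF: "card F \<le> 1"
  proof -
    have "\<forall>x\<in>F. \<forall>y\<in>F. x = y"
      using fixed_unique[OF st1 i1 n1 sV inv2] unfolding F_def by auto
    then show ?thesis using finite_subset[OF FV fin] card_le_Suc0_iff_eq by (metis One_nat_def)
  qed
  have two: "d w \<ge> 2" if "w \<in> V" for w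
  proof -
    obtain x where x: "x \<in> V" "s x \<noteq> x" using ex by auto
    have "s x \<in> V" using sV x by auto
    then obtain w' where "w' \<in> V" "w' \<noteq> w" using x by metis
    then show ?thesis using deg_pos[OF st1 that] deg_pos[OF st2 that] unfolding d_def by fastforce
  qed
  have e1: "\<forall>e\<in>#tree1 D. edge_in V e" and e2: "\<forall>e\<in>#tree2 D. edge_in V e"
    using st1 st2 unfolding spanning_tree_def by auto
  have ac1: "acyc (tree1 D)" and ac2: "acyc (tree2 D)"
    using st1 st2 unfolding spanning_tree_iff by auto
  have sumd: "(\<Sum>w\<in>V. d w) = 2 * size (tree1 D) + 2 * size (tree2 D)"
    unfolding d_def using deg_sum[OF fin e1] deg_sum[OF fin e2] by (simp add: sum.distrib)
  have s1: "size (tree1 D) + 1 \<le> card V" by (rule acyc_size[OF fin V0 e1 ac1])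
  have s2: "size (tree2 D) + 1 \<le> card V" by (rule acyc_size[OF fin V0 e2 ac2])
  have split: "(\<Sum>w\<in>V. d w) = (\<Sum>w\<in>V - F. d w) + (\<Sum>w\<in>F. d w)"
    using sum.subset_diff[OF FV fin] .
  have lF: "(\<Sum>w\<in>F. d w) \<ge> 2 * card F"
  proof -
    have "(\<Sum>w\<in>F. d w) \<ge> (\<Sum>w\<in>F. 2)" by (rule sum_mono) (use two FV in auto)
    then show ?thesis by simp
  qed
  have lN: "(\<Sum>w\<in>V - F. d w) \<ge> 4 * card (V - F)"
  proof -
    have "(\<Sum>w\<in>V - F. d w) \<ge> (\<Sum>w\<in>V - F. 4)" by (rule sum_mono) (use H' in \<open>auto simp: F_def\<close>)
    then show ?thesis by simp
  qed
  have cV: "card V = card (V - F) + card F" using card_Diff_subset[OF finite_subset[OF FV fin] FV]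
    card_mono[OF fin FV] by simp
  show False using sumd s1 s2 split lF lN cV cF by linarith
qed



lemma hub_bridge:
  assumes ac: "acyc T" and hp: "{h,p} \<in># T" and hq: "{h,q} \<in># T" and pq: "p \<noteq> q"
    and X: "\<And>x y. {x,y} \<in># X \<Longrightarrow> reach (T - {#{h,p}#}) x y"
    and r: "reach X p q"
  shows False
proof -
  have r1: "reach (T - {#{h,p}#}) p q" by (rule reach_lift[OF X r])
  have ne: "{h,q} \<noteq> {h,p}" using pq by (auto simp: doubleton_eq_iff)
  have "{h,q} \<in># T - {#{h,p}#}" using hq in_diff_single[OF ne] by simp
  then have "reach (T - {#{h,p}#}) h q" by (rule reach_edge)
  then have "reach (T - {#{h,p}#}) q h" by (rule reach_sym)
  then have "reach (T - {#{h,p}#}) p h" by (rule reach_trans[OF r1])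
  then have "reach (T - {#{h,p}#}) h p" by (rule reach_sym)
  then show False using acycD[OF ac hp] by simp
qed

lemma suppress:
  assumes st: "spanning_tree V T" and TA: "T = T0 + A" and WV: "W \<subseteq> V"
    and T0W: "\<forall>e\<in>#T0. edge_in W e" and BW: "\<forall>e\<in>#B. edge_in W e"
    and BA: "\<And>p q. {p,q} \<in># B \<Longrightarrow> reach A p q"
    and fW: "\<And>w. w \<in> W \<Longrightarrow> f w = w"
    and Amap: "\<And>x y. {x,y} \<in># A \<Longrightarrow> reach (T0 + B) (f x) (f y)"
    and Bbr: "\<And>e p q. e \<in># B \<Longrightarrow> e = {p,q} \<Longrightarrow> \<not> reach (T0 + B - {#e#}) p q"
  shows "spanning_tree W (T0 + B)"
proof -
  have ac: "acyc T" and con: "connected_on V T" using st unfolding spanning_tree_iff by auto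
  have ein: "\<forall>e\<in>#T0 + B. edge_in W e" using T0W BW by auto
  have conW: "connected_on W (T0 + B)"
    unfolding connected_on_def
  proof (intro ballI)
    fix x y assume xy: "x \<in> W" "y \<in> W"
    then have r: "reach T x y" using con WV unfolding connected_on_def by auto
    have "reach (T0 + B) (f x) (f y)"
    proof (rule reach_map[OF _ r])
      fix p q assume pq: "{p,q} \<in># T"
      show "reach (T0 + B) (f p) (f q)"
      proof (cases "{p,q} \<in># T0")
        case True
        then have "p \<in> W" "q \<in> W" using edge_in_pair[OF T0W[rule_format, OF True]] by auto
        then show ?thesis using fW True by (auto intro: reach_edge)
      next
        case False
        then have "{p,q} \<in># A" using pq TA by simp
        then show ?thesis by (rule Amap)
      qed
    qed
    then show "reach (T0 + B) x y" using fW xy by simp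
  qed
  have acW: "acyc (T0 + B)"
    unfolding acyc_def
  proof (intro ballI allI impI notI)
    fix e p q assume e: "e \<in># T0 + B" "e = {p,q}" and r: "reach (T0 + B - {#e#}) p q"
    show False
    proof (cases "e \<in># T0")
      case False
      then have "e \<in># B" using e(1) by simp
      then show False using Bbr e(2) r by blast
    next
      case True
      have eT: "e \<in># T" using TA True by simp
      have Te: "T - {#e#} = (T0 - {#e#}) + A" using TA True by (simp add: diff_union_swap2)
      have T0B: "T0 + B - {#e#} = (T0 - {#e#}) + B" using True by (simp add: diff_union_swap2)
      have "reach (T - {#e#}) p q"
      proof (rule reach_lift[OF _ r])
        fix x y assume xy: "{x,y} \<in># T0 + B - {#e#}"
        show "reach (T - {#e#}) x y"
        proof (cases "{x,y} \<in># T0 - {#e#}")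
          case True then show ?thesis using Te by (auto intro: reach_edge)
        next
          case False
          then have "{x,y} \<in># B" using xy T0B by simp
          then have "reach A x y" by (rule BA)
          then show ?thesis by (rule reach_mono[rotated]) (simp add: Te)
        qed
      qed
      then show False using acycD[OF ac, of p q] eT e(2) by simp
    qed
  qed
  show ?thesis unfolding spanning_tree_iff using ein conW acW by blast
qed

lemma img_mem_iff:
  assumes inv2: "\<forall>x\<in>V. s (s x) = x" and eV: "e \<subseteq> V" and w: "w \<in> V"
  shows "s w \<in> s ` e \<longleftrightarrow> w \<in> e" and "w \<in> s ` e \<longleftrightarrow> s w \<in> e"
proof -
  show "s w \<in> s ` e \<longleftrightarrow> w \<in> e"
  proof
    assume "s w \<in> s ` e"
    then obtain x where "x \<in> e" "s w = s x" by auto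
    then have "s (s w) = s (s x)" by simp
    then show "w \<in> e" using inv2 eV w \<open>x \<in> e\<close> by auto
  qed auto
  show "w \<in> s ` e \<longleftrightarrow> s w \<in> e"
  proof
    assume "w \<in> s ` e"
    then obtain x where "x \<in> e" "w = s x" by auto
    then show "s w \<in> e" using inv2 eV by auto
  next
    assume "s w \<in> e"
    then have "s (s w) \<in> s ` e" by auto
    then show "w \<in> s ` e" using inv2 w by simp
  qed
qed

lemma edge_sub: "edge_in V e \<Longrightarrow> e \<subseteq> V"
  unfolding edge_in_def by auto

lemma nbr_img:
  assumes inv: "image_mset (image s) T = T" and ein: "\<forall>e\<in>#T. edge_in V e"
    and inv2: "\<forall>x\<in>V. s (s x) = x" and v: "v \<in> V"
  shows "filter_mset (\<lambda>e. s v \<in> e) T = image_mset (image s) (filter_mset (\<lambda>e. v \<in> e) T)"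
proof -
  have c: "filter_mset (\<lambda>e. s v \<in> s ` e) T = filter_mset (\<lambda>e. v \<in> e) T"
  proof (rule filter_mset_cong[OF refl])
    fix e assume "e \<in># T"
    then have eV: "e \<subseteq> V" using edge_sub ein by blast
    show "(s v \<in> s ` e) = (v \<in> e)" by (rule img_mem_iff(1)[OF inv2 eV v])
  qed
  have "filter_mset (\<lambda>e. s v \<in> e) T = filter_mset (\<lambda>e. s v \<in> e) (image_mset (image s) T)"
    using inv by simp
  also have "\<dots> = image_mset (image s) (filter_mset (\<lambda>e. s v \<in> s ` e) T)"
    by (rule filter_mset_image_mset)
  finally show ?thesis unfolding c .
qed

lemma filt_inv:
  assumes inv: "image_mset (image s) T = T" and ein: "\<forall>e\<in>#T. edge_in V e"
    and inv2: "\<forall>x\<in>V. s (s x) = x" and v: "v \<in> V"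
  shows "image_mset (image s) (filter_mset (\<lambda>e. v \<notin> e \<and> s v \<notin> e) T)
         = filter_mset (\<lambda>e. v \<notin> e \<and> s v \<notin> e) T"
proof -
  have "filter_mset (\<lambda>e. v \<notin> e \<and> s v \<notin> e) T
        = filter_mset (\<lambda>e. v \<notin> s ` e \<and> s v \<notin> s ` e) T"
  proof (rule filter_mset_cong[OF refl])
    fix e assume "e \<in># T"
    then have eV: "e \<subseteq> V" using edge_sub ein by blast
    show "(v \<notin> e \<and> s v \<notin> e) = (v \<notin> s ` e \<and> s v \<notin> s ` e)"
      using img_mem_iff(2)[OF inv2 eV v] img_mem_iff(1)[OF inv2 eV v] by blast
  qed
  then have "image_mset (image s) (filter_mset (\<lambda>e. v \<notin> e \<and> s v \<notin> e) T)
       = image_mset (image s) (filter_mset (\<lambda>e. v \<notin> s ` e \<and> s v \<notin> s ` e) T)" by simp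
  also have "\<dots> = filter_mset (\<lambda>e. v \<notin> e \<and> s v \<notin> e) (image_mset (image s) T)"
    by (rule image_mset_filter_mset_swap)
  finally show ?thesis using inv by simp
qed

lemma filter_disj:
  "filter_mset (\<lambda>x. P x \<or> Q x) M = filter_mset P M + filter_mset (\<lambda>x. Q x \<and> \<not> P x) M"
  by (induction M) auto



lemma edge_pick: "edge_in V g \<Longrightarrow> v \<in> g \<Longrightarrow> \<exists>u. u \<in> V \<and> u \<noteq> v \<and> g = {v,u}"
  unfolding edge_in_def by (auto simp: insert_commute)

lemma reach_img: "reach M c d \<Longrightarrow> f ` {x,y} = {c,d} \<Longrightarrow> reach M (f x) (f y)"
  by (auto simp: doubleton_eq_iff intro: reach_sym)

lemma size2: "size M = 2 \<Longrightarrow> \<exists>x y. M = {#x, y#}"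
proof -
  assume s: "size M = 2"
  then have "M \<noteq> {#}" by auto
  then obtain x where x: "x \<in># M" by blast
  then have "size (M - {#x#}) = 1" using s by (simp add: size_Diff_submset)
  then obtain y where "M - {#x#} = {#y#}" using size_1_singleton_mset by blast
  then have "M = {#x, y#}" using x by (metis insert_DiffM)
  then show ?thesis by blast
qed

definition T0 :: "('v \<Rightarrow> 'v) \<Rightarrow> 'v \<Rightarrow> 'v set multiset \<Rightarrow> 'v set multiset" where
  "T0 s v T = filter_mset (\<lambda>e. v \<notin> e \<and> s v \<notin> e) T"

lemma ctx_basic:
  assumes st: "spanning_tree V T" and inv: "image_mset (image s) T = T"
    and nf: "\<forall>e\<in>#T. s ` e \<noteq> e" and sV: "s ` V \<subseteq> V" and inv2: "\<forall>x\<in>V. s (s x) = x"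
    and v: "v \<in> V" "s v \<noteq> v"
  shows "T = T0 s v T + filter_mset (\<lambda>e. v \<in> e) T + image_mset (image s) (filter_mset (\<lambda>e. v \<in> e) T)"
    and "\<forall>e\<in># T0 s v T. edge_in (V - {v, s v}) e"
    and "image_mset (image s) (T0 s v T) = T0 s v T"
    and "\<And>u. {v,u} \<in># T \<Longrightarrow> u \<in> V - {v, s v} \<and> s u \<in> V - {v, s v}"
proof -
  have ein: "\<forall>e\<in>#T. edge_in V e" using st unfolding spanning_tree_def by auto
  have sv: "s v \<in> V" using sV v by auto
  have noboth: "\<not> (s v \<in> e \<and> v \<in> e)" if "e \<in># T" for e
  proof
    assume h: "s v \<in> e \<and> v \<in> e"
    have "edge_in V e" using ein that by blast
    then obtain x y where xy: "x \<noteq> y" "e = {x,y}" unfolding edge_in_def by blast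
    have "v = x \<or> v = y" "s v = x \<or> s v = y" using h xy by auto
    then have "e = {v, s v}" using xy v(2) by (elim disjE) (simp_all add: insert_commute)
    moreover have "s ` {v, s v} = {v, s v}" using inv2 v by auto
    ultimately show False using nf[rule_format, OF that] by simp
  qed
  have "T = filter_mset (\<lambda>e. v \<notin> e \<and> s v \<notin> e) T + filter_mset (\<lambda>e. \<not> (v \<notin> e \<and> s v \<notin> e)) T"
    by (rule multiset_partition)
  also have "filter_mset (\<lambda>e. \<not> (v \<notin> e \<and> s v \<notin> e)) T = filter_mset (\<lambda>e. v \<in> e \<or> s v \<in> e) T"
    by simp
  also have "\<dots> = filter_mset (\<lambda>e. v \<in> e) T + filter_mset (\<lambda>e. s v \<in> e \<and> v \<notin> e) T"
    by (rule filter_disj)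
  also have "filter_mset (\<lambda>e. s v \<in> e \<and> v \<notin> e) T = filter_mset (\<lambda>e. s v \<in> e) T"
    by (rule filter_mset_cong[OF refl]) (use noboth in blast)
  also have "\<dots> = image_mset (image s) (filter_mset (\<lambda>e. v \<in> e) T)"
    by (rule nbr_img[OF inv ein inv2 v(1)])
  finally show "T = T0 s v T + filter_mset (\<lambda>e. v \<in> e) T + image_mset (image s) (filter_mset (\<lambda>e. v \<in> e) T)"
    unfolding T0_def by (simp add: add.assoc)
  show "\<forall>e\<in># T0 s v T. edge_in (V - {v, s v}) e"
    unfolding T0_def edge_in_def using ein unfolding edge_in_def by fastforce
  show "image_mset (image s) (T0 s v T) = T0 s v T"
    unfolding T0_def by (rule filt_inv[OF inv ein inv2 v(1)])
  fix u assume u: "{v,u} \<in># T"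
  have uV: "u \<in> V" "u \<noteq> v" using edge_in_pair[OF ein[rule_format, OF u]] by auto
  have "u \<noteq> s v" using noboth[OF u] by auto
  moreover have "s u \<noteq> v" using \<open>u \<noteq> s v\<close> inv2 uV(1) by metis
  moreover have "s u \<noteq> s v" using uV inv2 v(1) by metis
  moreover have "s u \<in> V" using sV uV by auto
  ultimately show "u \<in> V - {v, s v} \<and> s u \<in> V - {v, s v}" using uV by auto
qed



lemma leaf_case:
  assumes st: "spanning_tree V T" and inv: "image_mset (image s) T = T"
    and nf: "\<forall>e\<in>#T. s ` e \<noteq> e" and sV: "s ` V \<subseteq> V" and inv2: "\<forall>x\<in>V. s (s x) = x"
    and v: "v \<in> V" "s v \<noteq> v" and d: "deg T v = 1"
  shows "\<exists>u. u \<in> V - {v, s v} \<and> T = T0 s v T + {#{v,u}, {s v, s u}#}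
             \<and> spanning_tree (V - {v, s v}) (T0 s v T)"
proof -
  note cb = ctx_basic[OF st inv nf sV inv2 v]
  have ein: "\<forall>e\<in>#T. edge_in V e" using st unfolding spanning_tree_def by auto
  obtain g where g: "filter_mset (\<lambda>e. v \<in> e) T = {#g#}"
    using d size_1_singleton_mset unfolding deg_def by blast
  have "g \<in># filter_mset (\<lambda>e. v \<in> e) T" using g by simp
  then have gT: "g \<in># T" "v \<in> g" by simp_all
  obtain u where u: "u \<in> V" "u \<noteq> v" "g = {v,u}" using edge_pick[OF ein[rule_format, OF gT(1)] gT(2)] by blast
  have uW: "u \<in> V - {v, s v}" "s u \<in> V - {v, s v}" using cb(4)[of u] gT(1) u(3) by auto
  have TA: "T = T0 s v T + {#{v,u}, {s v, s u}#}"
    using cb(1) g u(3) by (simp add: add_mset_commute)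
  define f where "f = (\<lambda>w. if w = v then u else if w = s v then s u else w)"
  have fW: "\<And>w. w \<in> V - {v, s v} \<Longrightarrow> f w = w" unfolding f_def by auto
  have fu: "f v = u" "f u = u" "f (s v) = s u" "f (s u) = s u"
    using uW v(2) unfolding f_def by auto
  have st0: "spanning_tree (V - {v, s v}) (T0 s v T + {#})"
  proof (rule suppress[OF st _ _ cb(2), where A="{#{v,u}, {s v, s u}#}" and f=f])
    show "T = T0 s v T + {#{v, u}, {s v, s u}#}" by (rule TA)
    show "V - {v, s v} \<subseteq> V" by auto
    show "\<forall>e\<in>#{#}. edge_in (V - {v, s v}) e" by simp
    show "\<And>p q. {p, q} \<in># {#} \<Longrightarrow> reach {#{v, u}, {s v, s u}#} p q" by simp
    show "\<And>w. w \<in> V - {v, s v} \<Longrightarrow> f w = w" by (rule fW)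
    show "\<And>e p q. e \<in># {#} \<Longrightarrow> e = {p, q} \<Longrightarrow> \<not> reach (T0 s v T + {#} - {#e#}) p q" by simp
    fix x y assume "{x, y} \<in># {#{v, u}, {s v, s u}#}"
    then have "{x,y} = {v,u} \<or> {x,y} = {s v, s u}" by simp
    then have "f ` {x,y} = f ` {v,u} \<or> f ` {x,y} = f ` {s v, s u}" by (elim disjE) simp_all
    then have "f ` {x,y} = {u,u} \<or> f ` {x,y} = {s u, s u}" using fu by simp
    then show "reach (T0 s v T + {#}) (f x) (f y)"
      using reach_img[OF reach_refl[of _ u], of f x y] reach_img[OF reach_refl[of _ "s u"], of f x y] by blast
  qed
  show ?thesis using uW(1) TA st0 by (intro exI[of _ u]) simp
qed



lemma T0_mem: "g \<in># T0 s v T \<Longrightarrow> g \<in># T \<and> v \<notin> g \<and> s v \<notin> g"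
  unfolding T0_def by simp

lemma deg2_case:
  assumes st: "spanning_tree V T" and inv: "image_mset (image s) T = T"
    and nf: "\<forall>e\<in>#T. s ` e \<noteq> e" and sV: "s ` V \<subseteq> V" and inv2: "\<forall>x\<in>V. s (s x) = x"
    and v: "v \<in> V" "s v \<noteq> v" and d: "deg T v = 2"
  shows "\<exists>a b. a \<in> V - {v, s v} \<and> b \<in> V - {v, s v} \<and> a \<noteq> b \<and> s ` {a,b} \<noteq> {a,b} \<and>
             T = T0 s v T + {#{v,a}, {s v, s a}, {v,b}, {s v, s b}#}
             \<and> spanning_tree (V - {v, s v}) (T0 s v T + {#{a,b}, {s a, s b}#})"
proof -
  note cb = ctx_basic[OF st inv nf sV inv2 v]
  define W where "W = V - {v, s v}"
  have ein: "\<forall>e\<in>#T. edge_in V e" and ac: "acyc T" using st unfolding spanning_tree_iff by auto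
  obtain g1 g2 where g: "filter_mset (\<lambda>e. v \<in> e) T = {#g1, g2#}"
    using d size2 unfolding deg_def by blast
  have "g1 \<in># filter_mset (\<lambda>e. v \<in> e) T" "g2 \<in># filter_mset (\<lambda>e. v \<in> e) T" using g by simp_all
  then have g1: "g1 \<in># T" "v \<in> g1" and g2: "g2 \<in># T" "v \<in> g2" by simp_all
  obtain a where a: "a \<in> V" "a \<noteq> v" "g1 = {v,a}" using edge_pick[OF ein[rule_format, OF g1(1)] g1(2)] by blast
  obtain b where b: "b \<in> V" "b \<noteq> v" "g2 = {v,b}" using edge_pick[OF ein[rule_format, OF g2(1)] g2(2)] by blast
  have aW: "a \<in> W" "s a \<in> W" using cb(4)[of a] g1(1) a(3) unfolding W_def by auto
  have bW: "b \<in> W" "s b \<in> W" using cb(4)[of b] g2(1) b(3) unfolding W_def by auto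
  have sv: "s v \<in> V" "s (s v) = v" using sV v inv2 by auto
  have TA: "T = T0 s v T + {#{v,a}, {s v, s a}, {v,b}, {s v, s b}#}"
    using cb(1) g a(3) b(3) by (simp add: add_mset_commute)
  have va: "{v,a} \<in># T" and vb: "{v,b} \<in># T" and sva: "{s v, s a} \<in># T" and svb: "{s v, s b} \<in># T"
    by (subst TA, simp)+
  have ab: "a \<noteq> b"
  proof
    assume "a = b"
    then have "count (filter_mset (\<lambda>e. v \<in> e) T) {v,a} = 2" using g a(3) b(3) by simp
    then have "count T {v,a} = 2" by simp
    then have "{v,a} \<in># T - {#{v,a}#}" by (simp add: in_diff_count)
    then have "reach (T - {#{v,a}#}) v a" by (rule reach_edge)
    then show False using acycD[OF ac va] by simp
  qed
  have sab: "s a \<noteq> s b" using ab inv2 a(1) b(1) by metis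
  have nW: "v \<notin> W" "s v \<notin> W" unfolding W_def by auto
  have nfix: "s ` {a,b} \<noteq> {a,b}"
  proof
    assume h: "s ` {a,b} = {a,b}"
    then have "{s a, s b} = {a,b}" by simp
    then have "(s a = a \<and> s b = b) \<or> (s a = b \<and> s b = a)" by (simp add: doubleton_eq_iff)
    then have e1: "{s v, a} \<in># T" and e2: "{s v, b} \<in># T" using sva svb by auto
    show False
    proof (rule hub_bridge[OF ac va vb ab, where X="{#{a, s v}, {s v, b}#}"])
      fix x y assume "{x,y} \<in># {#{a, s v}, {s v, b}#}"
      then have "{x,y} = {s v, a} \<or> {x,y} = {s v, b}" by (auto simp: insert_commute)
      moreover have "{s v, a} \<noteq> {v, a}" "{s v, b} \<noteq> {v, a}" using v(2) aW bW nW
        by (auto simp: doubleton_eq_iff)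
      ultimately have "{x,y} \<in># T - {#{v,a}#}" using e1 e2 in_diff_single by metis
      then show "reach (T - {#{v, a}#}) x y" by (rule reach_edge)
    next
      have "reach {#{a, s v}, {s v, b}#} a (s v)" "reach {#{a, s v}, {s v, b}#} (s v) b"
        by (auto intro: reach_edge)
      then show "reach {#{a, s v}, {s v, b}#} a b" by (rule reach_trans)
    qed
  qed
  have ne_ab: "{a,b} \<noteq> {s a, s b}" using nfix by simp
  define A where "A = {#{v,a}, {s v, s a}, {v,b}, {s v, s b}#}"
  define B where "B = {#{a,b}, {s a, s b}#}"
  define f where "f = (\<lambda>w. if w = v then a else if w = s v then s a else w)"
  have fW: "\<And>w. w \<in> W \<Longrightarrow> f w = w" unfolding f_def W_def by auto
  have fv: "f v = a" "f (s v) = s a" using v(2) unfolding f_def by auto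
  have fo: "f a = a" "f b = b" "f (s a) = s a" "f (s b) = s b" using fW aW bW by auto
  have hubA: "reach A a b" "reach A (s a) (s b)"
  proof -
    have "reach A a v" "reach A v b" "reach A (s a) (s v)" "reach A (s v) (s b)"
      unfolding A_def by (auto intro: reach_edge reach_sym)
    then show "reach A a b" "reach A (s a) (s b)" by (auto intro: reach_trans)
  qed
  have stW: "spanning_tree W (T0 s v T + B)"
  proof (rule suppress[OF st _ _ _ _ _ fW])
    show "T = T0 s v T + A" unfolding A_def by (rule TA)
    show "W \<subseteq> V" unfolding W_def by auto
    show "\<forall>e\<in>#T0 s v T. edge_in W e" using cb(2) unfolding W_def .
    show "\<forall>e\<in>#B. edge_in W e" unfolding B_def edge_in_def using aW bW ab sab by auto
    fix p q assume "{p,q} \<in># B"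
    then have "{p,q} = {a,b} \<or> {p,q} = {s a, s b}" unfolding B_def by simp
    then show "reach A p q"
      using reach_img[OF hubA(1), of "\<lambda>x. x" p q] reach_img[OF hubA(2), of "\<lambda>x. x" p q] by auto
  next
    fix x y assume "{x,y} \<in># A"
    then have "{x,y} = {v,a} \<or> {x,y} = {s v, s a} \<or> {x,y} = {v,b} \<or> {x,y} = {s v, s b}"
      unfolding A_def by simp
    then have "f ` {x,y} = {a,a} \<or> f ` {x,y} = {s a, s a} \<or> f ` {x,y} = {a,b} \<or> f ` {x,y} = {s a, s b}"
      using fv fo by (elim disjE) simp_all
    moreover have "reach (T0 s v T + B) a b" "reach (T0 s v T + B) (s a) (s b)"
      unfolding B_def by (auto intro: reach_edge)
    ultimately show "reach (T0 s v T + B) (f x) (f y)"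
      using reach_img[OF reach_refl[of _ a], of f x y] reach_img[OF reach_refl[of _ "s a"], of f x y]
        reach_img[of _ a b f x y] reach_img[of _ "s a" "s b" f x y] by blast
  next
    fix e p q assume e: "e \<in># B" "e = {p,q}"
    have T0m: "g \<in># T - {#h#}" if "g \<in># T0 s v T" "v \<in> h \<or> s v \<in> h" for g h
      using T0_mem[OF that(1)] that(2) in_diff_single by metis
    show "\<not> reach (T0 s v T + B - {#e#}) p q"
    proof
      assume r: "reach (T0 s v T + B - {#e#}) p q"
      from e(1) have "e = {a,b} \<or> e = {s a, s b}" unfolding B_def by simp
      then show False
      proof
        assume eab: "e = {a,b}"
        have X: "T0 s v T + B - {#e#} = T0 s v T + {#{s a, s b}#}" unfolding B_def eab by simp
        have r2: "reach (T0 s v T + {#{s a, s b}#}) a b"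
          using reach_img[OF r, of "\<lambda>x. x" a b] e(2) eab X by simp
        show False
        proof (rule hub_bridge[OF ac va vb ab _ r2])
          fix x y assume "{x,y} \<in># T0 s v T + {#{s a, s b}#}"
          then have "{x,y} \<in># T0 s v T \<or> {x,y} = {s a, s b}" by auto
          moreover have "{s v, s a} \<in># T - {#{v,a}#}" "{s v, s b} \<in># T - {#{v,a}#}"
            using sva svb in_diff_single v(2) nW aW bW by (metis doubleton_eq_iff)+
          ultimately show "reach (T - {#{v, a}#}) x y"
            using T0m[of "{x,y}" "{v,a}"] reach_edge[of x y] reach_img[of _ "s a" "s b" "\<lambda>x. x" x y]
              reach_trans[OF reach_sym[OF reach_edge], OF \<open>{s v, s a} \<in># T - {#{v,a}#}\<close>
                reach_edge[OF \<open>{s v, s b} \<in># T - {#{v,a}#}\<close>]]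
            by auto
        qed
      next
        assume eab: "e = {s a, s b}"
        have X: "T0 s v T + B - {#e#} = T0 s v T + {#{a, b}#}" unfolding B_def eab by simp
        have r2: "reach (T0 s v T + {#{a, b}#}) (s a) (s b)"
          using reach_img[OF r, of "\<lambda>x. x" "s a" "s b"] e(2) eab X by simp
        show False
        proof (rule hub_bridge[OF ac sva svb sab _ r2])
          fix x y assume "{x,y} \<in># T0 s v T + {#{a, b}#}"
          then have "{x,y} \<in># T0 s v T \<or> {x,y} = {a, b}" by auto
          moreover have "{v, a} \<in># T - {#{s v, s a}#}" "{v, b} \<in># T - {#{s v, s a}#}"
            using va vb in_diff_single v(2) nW aW bW by (metis doubleton_eq_iff)+
          ultimately show "reach (T - {#{s v, s a}#}) x y"
            using T0m[of "{x,y}" "{s v, s a}"] reach_edge[of x y] reach_img[of _ a b "\<lambda>x. x" x y]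
              reach_trans[OF reach_sym[OF reach_edge], OF \<open>{v, a} \<in># T - {#{s v, s a}#}\<close>
                reach_edge[OF \<open>{v, b} \<in># T - {#{s v, s a}#}\<close>]]
            by auto
        qed
      qed
    qed
  qed
  show ?thesis
    using aW(1) bW(1) ab nfix TA stW unfolding W_def B_def by blast
qed



lemma leaf_ext:
  assumes "u \<in> W" "T = M + {#{v,u}, {s v, s u}#}"
  shows "sym_ext W s v 1 0 M T"
  unfolding sym_ext_def
  by (rule exI[of _ "[u]"]) (use assms in \<open>simp add: add_edges_def\<close>)

lemma mset_set_two: "x \<noteq> y \<Longrightarrow> mset_set {x, y} = {#x, y#}"
  by simp

lemma deg2_ext:
  assumes "a \<in> W" "b \<in> W" "s ` {a,b} \<noteq> {a,b}" "T = M + {#{v,a}, {s v, s a}, {v,b}, {s v, s b}#}"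
  shows "sym_ext W s v 1 1 (M + {#{a,b}, {s a, s b}#}) T"
  unfolding sym_ext_def
proof (rule exI[of _ "[a,b]"], intro conjI)
  have ms: "mset_set {{a,b}, s ` {a,b}} = {#{a,b}, {s a, s b}#}"
  proof -
    have "{s a, s b} \<noteq> {a, b}" using assms(3) by simp
    then have "{a,b} \<noteq> {s a, s b}" by metis
    then show ?thesis using mset_set_two[of "{a,b}" "{s a, s b}"] by simp
  qed
  show "length [a, b] = 1 + 1" by simp
  show "set [a, b] \<subseteq> W" using assms by simp
  show "1 = 0 \<and> T = M + {#{a, b}, {s a, s b}#} + add_edges s v [a, b] \<or>
    1 = 1 \<and> {[a, b] ! 0, [a, b] ! 1} \<in># M + {#{a, b}, {s a, s b}#} \<and>
    T = M + {#{a, b}, {s a, s b}#} - mset_set {{[a, b] ! 0, [a, b] ! 1}, s ` {[a, b] ! 0, [a, b] ! 1}} +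
        add_edges s v [a, b]"
    using ms assms(4) by (simp add: add_edges_def add_mset_commute)
qed



lemma graph_ext0:
  assumes "u1 \<in> W" "u2 \<in> W" "T1 = M1 + {#{v,u1}, {s v, s u1}#}" "T2 = M2 + {#{v,u2}, {s v, s u2}#}"
  shows "sym_ext W s v 2 0 (M1 + M2) (T1 + T2)"
  unfolding sym_ext_def
  by (rule exI[of _ "[u1,u2]"]) (use assms in \<open>simp add: add_edges_def add_mset_commute\<close>)

lemma graph_ext1:
  assumes "a \<in> W" "b \<in> W" "u \<in> W" "s ` {a,b} \<noteq> {a,b}"
    "T1 = M1 + {#{v,a}, {s v, s a}, {v,b}, {s v, s b}#}" "T2 = M2 + {#{v,u}, {s v, s u}#}"
  shows "sym_ext W s v 2 1 (M1 + {#{a,b}, {s a, s b}#} + M2) (T1 + T2)"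
  unfolding sym_ext_def
proof (rule exI[of _ "[a,b,u]"], intro conjI)
  have ms: "mset_set {{a,b}, s ` {a,b}} = {#{a,b}, {s a, s b}#}"
  proof -
    have "{s a, s b} \<noteq> {a, b}" using assms(4) by simp
    then have "{a,b} \<noteq> {s a, s b}" by metis
    then show ?thesis using mset_set_two[of "{a,b}" "{s a, s b}"] by simp
  qed
  show "length [a, b, u] = 2 + 1" by simp
  show "set [a, b, u] \<subseteq> W" using assms by simp
  have e: "M1 + {#{a, b}, {s a, s b}#} + M2 - {#{a, b}, {s a, s b}#} = M1 + M2"
    by (simp add: add.commute add.left_commute)
  show "1 = 0 \<and> T1 + T2 = M1 + {#{a, b}, {s a, s b}#} + M2 + add_edges s v [a, b, u] \<or>
    1 = 1 \<and> {[a, b, u] ! 0, [a, b, u] ! 1} \<in># M1 + {#{a, b}, {s a, s b}#} + M2 \<and>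
    T1 + T2 = M1 + {#{a, b}, {s a, s b}#} + M2 - mset_set {{[a, b, u] ! 0, [a, b, u] ! 1}, s ` {[a, b, u] ! 0, [a, b, u] ! 1}} +
        add_edges s v [a, b, u]"
    using ms assms(5,6) e by (simp add: add_edges_def add_mset_commute)
qed

lemma G2sym_of:
  assumes fin: "finite (verts R)" and ne: "verts R \<noteq> {}"
    and st1: "spanning_tree (verts R) (tree1 R)" and st2: "spanning_tree (verts R) (tree2 R)"
    and sV: "symm R ` verts R \<subseteq> verts R" and inv2: "\<forall>x\<in>verts R. symm R (symm R x) = x"
    and i1: "image_mset (image (symm R)) (tree1 R) = tree1 R"
    and i2: "image_mset (image (symm R)) (tree2 R) = tree2 R"
    and n1: "\<forall>e\<in>#tree1 R. symm R ` e \<noteq> e" and n2: "\<forall>e\<in>#tree2 R. symm R ` e \<noteq> e"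
  shows "G2sym R"
proof (cases "\<exists>x\<in>verts R. symm R x \<noteq> x")
  case True
  have "sym_2td R" unfolding sym_2td_def using assms True by blast
  moreover have "no_fixed_edges R" unfolding no_fixed_edges_def edges_def using n1 n2 by auto
  ultimately show ?thesis unfolding G2sym_def by blast
next
  case False
  obtain x where x: "x \<in> verts R" using ne by blast
  have all: "y = x" if "y \<in> verts R" for y
    using fixed_unique[OF st1 i1 n1 sV inv2 that x] False that x by blast
  then have V1: "verts R = {x}" using x by blast
  have emp: "T = {#}" if "spanning_tree (verts R) T" for T
  proof (rule ccontr)
    assume "T \<noteq> {#}"
    then obtain e where "e \<in># T" by blast
    then have "edge_in (verts R) e" using that unfolding spanning_tree_def by blast
    then show False unfolding edge_in_def V1 by blast
  qed
  have "is_K1 R" unfolding is_K1_def using V1 emp[OF st1] emp[OF st2] False x by blast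
  then show ?thesis unfolding G2sym_def by blast
qed



lemma img_pair: "image_mset (image s) {#{a,b}, {s a, s b}#} = {#{s a, s b}, {s (s a), s (s b)}#}"
  by simp

lemma reduce:
  assumes sd: "sym_2td D" and nf: "no_fixed_edges D" and v: "v \<in> verts D" "symm D v \<noteq> v"
    and d1: "deg (tree1 D) v \<le> 2" and d2: "deg (tree2 D) v = 1"
  shows "\<exists>R j. G2sym R \<and> two_tree_ext R D j \<and> card (verts R) < card (verts D)"
proof -
  define V where "V = verts D"
  define s where "s = symm D"
  define T1 where "T1 = tree1 D"
  define T2 where "T2 = tree2 D"
  have fin: "finite V" and st1: "spanning_tree V T1" and st2: "spanning_tree V T2"
    and sV: "s ` V \<subseteq> V" and inv2: "\<forall>x\<in>V. s (s x) = x"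
    and i1: "image_mset (image s) T1 = T1" and i2: "image_mset (image s) T2 = T2"
    using sd unfolding sym_2td_def V_def s_def T1_def T2_def by auto
  have n1: "\<forall>e\<in>#T1. s ` e \<noteq> e" and n2: "\<forall>e\<in>#T2. s ` e \<noteq> e"
    using nfe_trees[OF nf] unfolding s_def T1_def T2_def by auto
  have vV: "v \<in> V" "s v \<noteq> v" using v unfolding V_def s_def by auto
  define W where "W = V - {v, s v}"
  have svV: "s v \<in> V" using sV vV by auto
  have sW: "s ` W \<subseteq> W"
  proof
    fix y assume "y \<in> s ` W"
    then obtain w where w: "w \<in> W" "y = s w" by auto
    have "s w \<in> V" using sV w(1) unfolding W_def by auto
    moreover have "s w \<noteq> v" using w(1) inv2 unfolding W_def by force
    moreover have "s w \<noteq> s v" using w(1) inv2 vV(1) unfolding W_def by (metis DiffD1 DiffD2 insertCI)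
    ultimately show "y \<in> W" using w(2) unfolding W_def by auto
  qed
  have inv2W: "\<forall>x\<in>W. s (s x) = x" using inv2 unfolding W_def by auto
  have finW: "finite W" using fin unfolding W_def by auto
  have "W \<subset> V" unfolding W_def using vV(1) by blast
  then have cardW: "card W < card V" using psubset_card_mono[OF fin] by blast
  have VW: "V = W \<union> {v, s v}" unfolding W_def using vV(1) svV by blast
  have np: "new_pair R D' v" if "verts R = W" "verts D' = V" "symm D' = s" "symm R = s" for R D'
    unfolding new_pair_def that
  proof (intro conjI ballI)
    show "v \<notin> W" "s v \<notin> W" unfolding W_def by blast+
    show "v \<noteq> s v" using vV(2) by simp
    show "V = W \<union> {v, s v}" by (rule VW)
  qed simp
  note c2 = ctx_basic[OF st2 i2 n2 sV inv2 vV]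
  have dd: "deg T2 v = 1" using d2 unfolding T2_def .
  have "\<exists>u. u \<in> V - {v, s v} \<and> T2 = T0 s v T2 + {#{v,u}, {s v, s u}#}
             \<and> spanning_tree (V - {v, s v}) (T0 s v T2)"
    by (rule leaf_case[OF st2 i2 n2 sV inv2 vV dd])
  then obtain u where uu: "u \<in> V - {v, s v} \<and> T2 = T0 s v T2 + {#{v,u}, {s v, s u}#}
             \<and> spanning_tree (V - {v, s v}) (T0 s v T2)" by (rule exE)
  have u: "u \<in> W" using conjunct1[OF uu] unfolding W_def .
  note T2e = conjunct1[OF conjunct2[OF uu]]
  have st2': "spanning_tree W (T0 s v T2)" using conjunct2[OF conjunct2[OF uu]] unfolding W_def .
  note c1 = ctx_basic[OF st1 i1 n1 sV inv2 vV]
  have nT0: "\<forall>e\<in>#T0 s v T. s ` e \<noteq> e" if "\<forall>e\<in>#T. s ` e \<noteq> e" for T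
  proof
    fix e assume "e \<in># T0 s v T"
    then have "e \<in># T" by (rule conjunct1[OF T0_mem])
    then show "s ` e \<noteq> e" using that by blast
  qed
  have key: "\<exists>R j. G2sym R \<and> two_tree_ext R D j \<and> card (verts R) < card (verts D)"
    if sA: "spanning_tree W T1'" and iA: "image_mset (image s) T1' = T1'"
      and nA: "\<forall>e\<in>#T1'. s ` e \<noteq> e" and k1: "k1 \<in> {0,1}"
      and e1: "sym_ext W s v 1 k1 T1' T1" and eg: "sym_ext W s v 2 k1 (T1' + T0 s v T2) (T1 + T2)"
    for T1' k1
  proof -
    define R where "R = D\<lparr>verts := W, tree1 := T1', tree2 := T0 s v T2\<rparr>"
    have R: "verts R = W" "symm R = s" "tree1 R = T1'" "tree2 R = T0 s v T2"
      unfolding R_def s_def by simp_all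
    have WV: "W \<noteq> {}" using u by auto
    have "G2sym R"
      by (rule G2sym_of) (use R finW WV sA st2' sW inv2W iA c2(3) nA nT0[OF n2] in simp_all)
    moreover have "two_tree_ext R D k1"
      unfolding two_tree_ext_def
    proof (intro conjI exI)
      show "k1 \<in> {0,1}" by (rule k1)
      show "new_pair R D v" by (rule np) (simp_all add: R V_def s_def)
      show "sym_ext (verts R) (symm D) v 2 k1 (edges R) (edges D)"
        using eg unfolding R edges_def T1_def T2_def s_def by simp
      show "k1 \<in> {0,1}" by (rule k1)
      show "(0::nat) \<in> {0,1}" by simp
      show "k1 + 0 = k1" by simp
      show "sym_ext (verts R) (symm D) v 1 k1 (tree1 R) (tree1 D)"
        using e1 unfolding R T1_def s_def by simp
      show "sym_ext (verts R) (symm D) v 1 0 (tree2 R) (tree2 D)"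
        using leaf_ext[OF u T2e] unfolding R T2_def s_def by simp
    qed
    moreover have "card (verts R) < card (verts D)" using cardW R unfolding V_def by simp
    ultimately show ?thesis by blast
  qed
  have "deg T1 v \<ge> 1" using deg_pos[OF st1 vV(1) svV] vV(2) by auto
  then have "deg T1 v = 1 \<or> deg T1 v = 2" using d1 unfolding T1_def by auto
  then show ?thesis
  proof
    assume d: "deg T1 v = 1"
    have "\<exists>u'. u' \<in> V - {v, s v} \<and> T1 = T0 s v T1 + {#{v,u'}, {s v, s u'}#}
             \<and> spanning_tree (V - {v, s v}) (T0 s v T1)"
      by (rule leaf_case[OF st1 i1 n1 sV inv2 vV d])
    then obtain u' where uu: "u' \<in> V - {v, s v} \<and> T1 = T0 s v T1 + {#{v,u'}, {s v, s u'}#}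
             \<and> spanning_tree (V - {v, s v}) (T0 s v T1)" by (rule exE)
    have u': "u' \<in> W" using conjunct1[OF uu] unfolding W_def .
    note T1e = conjunct1[OF conjunct2[OF uu]]
    have st1': "spanning_tree W (T0 s v T1)" using conjunct2[OF conjunct2[OF uu]] unfolding W_def .
    show ?thesis
    proof (rule key[OF st1' c1(3) nT0[OF n1], of 0])
      show "(0::nat) \<in> {0,1}" by simp
      show "sym_ext W s v 1 0 (T0 s v T1) T1" by (rule leaf_ext[OF u' T1e])
      show "sym_ext W s v 2 0 (T0 s v T1 + T0 s v T2) (T1 + T2)" by (rule graph_ext0[OF u' u T1e T2e])
    qed
  next
    assume d: "deg T1 v = 2"
    have "\<exists>a b. a \<in> V - {v, s v} \<and> b \<in> V - {v, s v} \<and> a \<noteq> b \<and> s ` {a,b} \<noteq> {a,b} \<and>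
             T1 = T0 s v T1 + {#{v,a}, {s v, s a}, {v,b}, {s v, s b}#}
             \<and> spanning_tree (V - {v, s v}) (T0 s v T1 + {#{a,b}, {s a, s b}#})"
      by (rule deg2_case[OF st1 i1 n1 sV inv2 vV d])
    then obtain a b where abb: "a \<in> V - {v, s v} \<and> b \<in> V - {v, s v} \<and> a \<noteq> b \<and> s ` {a,b} \<noteq> {a,b} \<and>
             T1 = T0 s v T1 + {#{v,a}, {s v, s a}, {v,b}, {s v, s b}#}
             \<and> spanning_tree (V - {v, s v}) (T0 s v T1 + {#{a,b}, {s a, s b}#})" by (elim exE)
    note abb' = conjunct2[OF conjunct2[OF conjunct2[OF conjunct2[OF abb]]]]
    note ab = conjunct1[OF abb] conjunct1[OF conjunct2[OF abb]] conjunct1[OF conjunct2[OF conjunct2[OF abb]]]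
      conjunct1[OF conjunct2[OF conjunct2[OF conjunct2[OF abb]]]]
    note T1e = conjunct1[OF abb'] and st1' = conjunct2[OF abb']
    have abW: "a \<in> W" "b \<in> W" using ab(1,2) unfolding W_def by simp_all
    have st1'': "spanning_tree W (T0 s v T1 + {#{a,b}, {s a, s b}#})" using st1' unfolding W_def .
    have aV: "a \<in> V" "b \<in> V" using ab(1,2) by simp_all
    have iB: "image_mset (image s) (T0 s v T1 + {#{a,b}, {s a, s b}#}) = T0 s v T1 + {#{a,b}, {s a, s b}#}"
      using c1(3) inv2 aV by (simp add: add_mset_commute)
    have nB: "\<forall>e\<in>#T0 s v T1 + {#{a,b}, {s a, s b}#}. s ` e \<noteq> e"
    proof -
      have "s ` {s a, s b} = {a,b}" using inv2 aV by simp
      then have "s ` {s a, s b} \<noteq> {s a, s b}" using ab(4) by auto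
      then show ?thesis using nT0[OF n1] ab(4) by auto
    qed
    show ?thesis
    proof (rule key[OF st1'' iB nB, of 1])
      show "(1::nat) \<in> {0,1}" by simp
      show "sym_ext W s v 1 1 (T0 s v T1 + {#{a,b}, {s a, s b}#}) T1" by (rule deg2_ext[OF abW ab(4) T1e])
      show "sym_ext W s v 2 1 (T0 s v T1 + {#{a,b}, {s a, s b}#} + T0 s v T2) (T1 + T2)"
        by (rule graph_ext1[OF abW u ab(4) T1e T2e])
    qed
  qed
qed



definition swp :: "'v s2td \<Rightarrow> 'v s2td" where
  "swp D = D\<lparr>tree1 := tree2 D, tree2 := tree1 D\<rparr>"

lemma swp_simps[simp]: "verts (swp D) = verts D" "symm (swp D) = symm D"
  "tree1 (swp D) = tree2 D" "tree2 (swp D) = tree1 D"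
  unfolding swp_def by simp_all

lemma edges_swp[simp]: "edges (swp D) = edges D"
  unfolding edges_def by (simp add: add.commute)

lemma sym_2td_swp: "sym_2td D \<Longrightarrow> sym_2td (swp D)"
  unfolding sym_2td_def by simp

lemma nfe_swp: "no_fixed_edges D \<Longrightarrow> no_fixed_edges (swp D)"
  unfolding no_fixed_edges_def by simp

lemma G2sym_swp: "G2sym D \<Longrightarrow> G2sym (swp D)"
  unfolding G2sym_def is_K1_def using sym_2td_swp nfe_swp by auto

lemma new_pair_swp: "new_pair R (swp D) v \<Longrightarrow> new_pair (swp R) D v"
  unfolding new_pair_def by simp

lemma tte_swp: "two_tree_ext R (swp D) j \<Longrightarrow> two_tree_ext (swp R) D j"
  unfolding two_tree_ext_def
proof (elim conjE exE, intro conjI exI)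
  fix v k1 k2
  assume j: "j \<in> {0,1}" and np: "new_pair R (swp D) v"
    and g: "sym_ext (verts R) (symm (swp D)) v 2 j (edges R) (edges (swp D))"
    and k: "k1 \<in> {0, 1}" "k2 \<in> {0, 1}" "k1 + k2 = j"
    and t1: "sym_ext (verts R) (symm (swp D)) v 1 k1 (tree1 R) (tree1 (swp D))"
    and t2: "sym_ext (verts R) (symm (swp D)) v 1 k2 (tree2 R) (tree2 (swp D))"
  show "j \<in> {0,1}" by (rule j)
  show "new_pair (swp R) D v" by (rule new_pair_swp[OF np])
  show "sym_ext (verts (swp R)) (symm D) v 2 j (edges (swp R)) (edges D)" using g by simp
  show "k2 \<in> {0,1}" "k1 \<in> {0,1}" using k by auto
  show "k2 + k1 = j" using k by simp
  show "sym_ext (verts (swp R)) (symm D) v 1 k2 (tree1 (swp R)) (tree1 D)" using t2 by simp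
  show "sym_ext (verts (swp R)) (symm D) v 1 k1 (tree2 (swp R)) (tree2 D)" using t1 by simp
qed

lemma step:
  assumes sd: "sym_2td D" and nf: "no_fixed_edges D"
  shows "\<exists>R j. G2sym R \<and> two_tree_ext R D j \<and> card (verts R) < card (verts D)"
proof -
  obtain v where v: "v \<in> verts D" "symm D v \<noteq> v" and d: "deg (tree1 D) v + deg (tree2 D) v \<le> 3"
    using low_vertex[OF sd nf] by blast
  have svV: "symm D v \<in> verts D" using sd v(1) unfolding sym_2td_def by blast
  have st1: "spanning_tree (verts D) (tree1 D)" and st2: "spanning_tree (verts D) (tree2 D)"
    using sd unfolding sym_2td_def by blast+
  have p1: "deg (tree1 D) v \<ge> 1" using deg_pos[OF st1 v(1) svV] v(2) by simp
  have p2: "deg (tree2 D) v \<ge> 1" using deg_pos[OF st2 v(1) svV] v(2) by simp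
  show ?thesis
  proof (cases "deg (tree2 D) v = 1")
    case True
    show ?thesis by (rule reduce[OF sd nf v]) (use d True in simp_all)
  next
    case False
    have "\<exists>R j. G2sym R \<and> two_tree_ext R (swp D) j \<and> card (verts R) < card (verts (swp D))"
    proof (rule reduce[OF sym_2td_swp[OF sd] nfe_swp[OF nf]])
      show "v \<in> verts (swp D)" "symm (swp D) v \<noteq> v" using v by simp_all
      show "deg (tree1 (swp D)) v \<le> 2" using d False p1 p2 by simp
      show "deg (tree2 (swp D)) v = 1" using d False p1 p2 by simp
    qed
    then obtain R j where "G2sym R" "two_tree_ext R (swp D) j" "card (verts R) < card (verts (swp D))"
      by blast
    then have "G2sym (swp R)" "two_tree_ext (swp R) D j" "card (verts (swp R)) < card (verts D)"
      using G2sym_swp tte_swp by simp_all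
    then show ?thesis by blast
  qed
qed

theorem corollary5p7:
  fixes G :: "'v s2td"
  assumes "G2sym G"
  shows "\<exists>Gs. Gs \<noteq> [] \<and> is_K1 (hd Gs) \<and> last Gs = G \<and>
           (\<forall>D\<in>set Gs. G2sym D) \<and>
           (\<forall>i. 0 < i \<and> i < length Gs \<longrightarrow>
              (\<exists>j\<in>{0, 1}. two_tree_ext (Gs ! (i - 1)) (Gs ! i) j))"
  using assms
proof (induction "card (verts G)" arbitrary: G rule: less_induct)
  case less
  show ?case
  proof (cases "is_K1 G")
    case True
    show ?thesis by (rule exI[of _ "[G]"]) (use True less.prems in simp)
  next
    case False
    then have sd: "sym_2td G" and nf: "no_fixed_edges G" using less.prems unfolding G2sym_def by auto
    obtain R j where R: "G2sym R" "two_tree_ext R G j" "card (verts R) < card (verts G)"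
      using step[OF sd nf] by blast
    have jj: "j \<in> {0,1}" using R(2) unfolding two_tree_ext_def by blast
    obtain Gs where Gs: "Gs \<noteq> []" "is_K1 (hd Gs)" "last Gs = R" "\<forall>D\<in>set Gs. G2sym D"
      "\<forall>i. 0 < i \<and> i < length Gs \<longrightarrow> (\<exists>j\<in>{0, 1}. two_tree_ext (Gs ! (i - 1)) (Gs ! i) j)"
      using less.hyps[OF R(3) R(1)] by blast
    show ?thesis
    proof (rule exI[of _ "Gs @ [G]"], intro conjI allI impI)
      show "Gs @ [G] \<noteq> []" by simp
      show "is_K1 (hd (Gs @ [G]))" using Gs(1,2) by simp
      show "last (Gs @ [G]) = G" by simp
      show "\<forall>D\<in>set (Gs @ [G]). G2sym D" using Gs(4) less.prems by simp
      fix i assume i: "0 < i \<and> i < length (Gs @ [G])"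
      show "\<exists>j\<in>{0, 1}. two_tree_ext ((Gs @ [G]) ! (i - 1)) ((Gs @ [G]) ! i) j"
      proof (cases "i < length Gs")
        case True
        then have "(Gs @ [G]) ! (i - 1) = Gs ! (i - 1)" "(Gs @ [G]) ! i = Gs ! i"
          by (simp_all add: nth_append)
        then show ?thesis using Gs(5) i True by simp
      next
        case False
        then have ii: "i = length Gs" using i by simp
        have "(Gs @ [G]) ! (i - 1) = R"
          using Gs(1,3) ii by (simp add: nth_append last_conv_nth)
        moreover have "(Gs @ [G]) ! i = G" using ii by simp
        ultimately show ?thesis using R(2) jj by auto
      qed
    qed
  qed
qed


end
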